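(* Let $q=2^n$ and $k\ge0$, and regard $D_k$ as a map ${\mathbb F}_q\to{\mathbb F}_q$. (i) $D_k(\mathcal T_1)=\{0\}$ iff $q+1$ divides $k$. If $q>2$, then $D_k(\mathcal T_0)=\{0\}$ iff $q-1$ divides $k$. (ii) $D_k(b)=b^2$ for all $b\in\mathcal T_1$ iff $k\equiv\pm2\pmod{q+1}$. If $q>2$, then $D_k(a)=a^2$ for all $a\in\mathcal T_0$ iff $k\equiv\pm2\pmod{q-1}$. (iii) Let $e\ge0$. If $e$ is even, then $D_{q^e-1}(a)=0$ and $D_{q^e+1}(a)=a^2$ for all $a\in{\mathbb F}_q$. If $e$ is odd, then $D_{q^e-1}(a)=0$ for $a\in\mathcal T_0\cup\{0\}$ and $=a^2$ for $a\in\mathcal T_1$, while $D_{q^e+1}(a)=a^2$ for $a\in\mathcal T_0\cup\{0\}$ and $=0$ for $a\in\mathcal T_1$.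
   Context: $D_k\in\mathbb Z[x]$: $D_0=2$, $D_1=x$, $D_{k+2}=xD_{k+1}-D_k$ (so $D_k(u+1/u)=u^k+u^{-k}$); over ${\mathbb F}_q$ with $q$ even, $D_0=0$. For $j\in\{0,1\}$, $\mathcal T_j=\{a\in{\mathbb F}_q^\times:\mathrm{Tr}_{{\mathbb F}_q/{\mathbb F}_2}(1/a)=j\}$. *)

theory Defs
  imports Main "HOL-Number_Theory.Cong" "HOL-Library.Cardinality"
begin

text \<open>Dickson polynomial D_k in Z[x], regarded as a map on a commutative ring
  (coefficients mapped via the canonical ring homomorphism):
  D_0 = 2, D_1 = x, D_(k+2) = x D_(k+1) - D_k.\<close>
fun dickson :: "nat \<Rightarrow> 'a::comm_ring_1 \<Rightarrow> 'a" where
  "dickson 0 x = 2"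
| "dickson (Suc 0) x = x"
| "dickson (Suc (Suc k)) x = x * dickson (Suc k) x - dickson k x"

definition abs_trace :: "nat \<Rightarrow> 'a::comm_ring_1 \<Rightarrow> 'a" where
  "abs_trace n x = (\<Sum>i<n. x ^ (2 ^ i))"

definition trace_set :: "nat \<Rightarrow> nat \<Rightarrow> 'a::field set" where
  "trace_set n j = {a. a \<noteq> 0 \<and> abs_trace n (inverse a) = of_nat j}"

end

theory Submission
  imports Defs "HOL-Computational_Algebra.Polynomial"
begin


lemma fermat:
  fixes x :: "'a::{field,finite}"
  shows "x ^ CARD('a) = x"
proof (cases "x = 0")
  case True
  have "CARD('a) > 0" by simp
  then show ?thesis using True by (simp add: zero_power)
next
  case False
  let ?U = "UNIV - {0::'a}"
  have bij: "bij_betw (\<lambda>y. x * y) ?U ?U"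
  proof -
    have "y \<in> (\<lambda>y. x * y) ` ?U" if "y \<noteq> 0" for y
      using False that by (intro image_eqI[of _ _ "inverse x * y"]) auto
    then show ?thesis unfolding bij_betw_def inj_on_def using False by auto
  qed
  have "(\<Prod>y\<in>?U. x * y) = (\<Prod>y\<in>?U. y)"
    using prod.reindex_bij_betw[OF bij, of "\<lambda>y. y"] by simp
  moreover have "(\<Prod>y\<in>?U. x * y) = x ^ card ?U * (\<Prod>y\<in>?U. y)"
    by (simp add: prod.distrib)
  moreover have "(\<Prod>y\<in>?U. y) \<noteq> 0" by simp
  ultimately have "x ^ card ?U = 1" by simp
  moreover have "card ?U = CARD('a) - 1" by (simp add: card_Diff_singleton)
  moreover have "CARD('a) \<ge> 1" by (simp add: Suc_leI)
  ultimately have "CARD('a) = Suc (card ?U)" and "x ^ card ?U = 1" by simp_all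
  then have "x ^ CARD('a) = x ^ card ?U * x" by (metis power_Suc2)
  then show ?thesis using \<open>x ^ card ?U = 1\<close> by simp
qed

lemma char2:
  assumes "CARD('a::{field,finite}) = 2 ^ n"
  shows "(2::'a) = 0" and "n \<ge> 1"
proof -
  have "card {0::'a, 1} \<le> CARD('a)" by (rule card_mono) auto
  then have "CARD('a) \<ge> 2" by simp
  then show n1: "n \<ge> 1" using assms by (cases n) auto
  have "even (CARD('a))" using assms n1 by (cases n) auto
  then have "(-1::'a) ^ CARD('a) = 1" by simp
  with fermat[of "-1::'a"] have "(-1::'a) = 1" by simp
  then show "(2::'a) = 0" by (metis add_eq_0_iff2 one_add_one)
qed

lemma dickson_cassini:
  "dickson (Suc m) x ^ 2 - x * dickson m x * dickson (Suc m) x + dickson m x ^ 2 = 4 - x^2"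
proof (induction m)
  case 0 then show ?case by (simp add: power2_eq_square algebra_simps)
next
  case (Suc m)
  have e: "dickson (Suc (Suc m)) x = x * dickson (Suc m) x - dickson m x" by simp
  show ?case unfolding e using Suc.IH by (simp add: power2_eq_square algebra_simps)
qed

lemma aux_ring:
  fixes A B x :: "'a::comm_ring_1"
  assumes "A^2 - x*B*A + B^2 = 4 - x^2"
  shows "x*(B*A - x) - (B^2-2) = A^2 - 2"
proof -
  have h: "x*(B*A - x) - (B^2-2) - (A^2 - 2) = -((A^2 - x*B*A + B^2) - (4 - x^2))"
    by (simp add: algebra_simps power2_eq_square)
  have "x*(B*A - x) - (B^2-2) - (A^2 - 2) = 0" unfolding h assms by simp
  then show ?thesis by (simp only: right_minus_eq)
qed

lemma dickson_double:
  "dickson (2*m) x = dickson m x ^ 2 - 2 \<and> dickson (2*m+1) x = dickson m x * dickson (Suc m) x - x"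
proof (induction m)
  case 0 then show ?case by (simp add: power2_eq_square)
next
  case (Suc m)
  have e1: "dickson (2 * Suc m) x = x * dickson (2*m+1) x - dickson (2*m) x"
    by (simp add: numeral_2_eq_2)
  have e2: "dickson (2 * Suc m + 1) x = x * dickson (2 * Suc m) x - dickson (2*m+1) x"
    by (simp add: numeral_2_eq_2)
  have e3: "dickson (Suc (Suc m)) x = x * dickson (Suc m) x - dickson m x" by simp
  have c: "dickson (Suc m) x ^ 2 - x * dickson m x * dickson (Suc m) x + dickson m x ^ 2 = 4 - x^2"
    by (rule dickson_cassini)
  have A: "dickson (2 * Suc m) x = dickson (Suc m) x ^ 2 - 2"
  proof -
    have i1: "dickson (2*m) x = dickson m x ^ 2 - 2" and i2: "dickson (2*m+1) x = dickson m x * dickson (Suc m) x - x"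
      using Suc.IH by auto
    show ?thesis unfolding e1 i1 i2 using c by (rule aux_ring)
  qed
  have B: "dickson (2 * Suc m + 1) x = dickson (Suc m) x * dickson (Suc (Suc m)) x - x"
    unfolding e2 e3 A using Suc.IH by (simp add: power2_eq_square algebra_simps)
  show ?case using A B by simp
qed

context
  fixes dummy :: "'a::field"
  assumes c2: "(2::'a) = 0"
begin

lemma c2_neg: "- (a::'a) = a"
proof -
  have "a + a = 0" using c2 by (metis mult_2 mult_zero_left)
  then show ?thesis by (simp add: add_eq_0_iff2 eq_neg_iff_add_eq_0)
qed

lemma c2_diff: "(a::'a) - b = a + b"
  using c2_neg[of b] by (metis diff_conv_add_uminus)

lemma c2_add_self: "(a::'a) + a = 0"
  using c2_diff[of a a] by simp

lemma d_rec2: "dickson (Suc (Suc k)) (x::'a) = x * dickson (Suc k) x + dickson k x"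
  by (simp add: c2_diff)

lemma d_zero: "dickson k (0::'a) = 0"
  by (induction k "0::'a" rule: dickson.induct) (simp_all add: c2)

lemma d_double: "dickson (2*m) (x::'a) = dickson m x ^ 2"
  using dickson_double[of m x] by (simp add: c2)

lemma d_pow2: "dickson (2^j) (x::'a) = x ^ (2^j)"
proof (induction j)
  case 0 then show ?case by simp
next
  case (Suc j)
  have "dickson (2^Suc j) x = dickson (2 * 2^j) x" by simp
  also have "\<dots> = (x^(2^j))^2" by (simp only: d_double Suc)
  finally show ?case by (simp add: power_mult[symmetric] mult.commute)
qed

lemma frob: "((a::'a) + b)^2 = a^2 + b^2"
  by (simp add: power2_sum c2_add_self mult_2[symmetric] c2 del: mult_2)

lemma frob_sum: "(\<Sum>i\<in>A. f i :: 'a)^2 = (\<Sum>i\<in>A. (f i)^2)"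
proof (induction A rule: infinite_finite_induct)
  case (infinite A) then show ?case by simp
next
  case empty then show ?case by simp
next
  case (insert a A) then show ?case by (simp add: frob)
qed

definition W :: "'a \<Rightarrow> nat \<Rightarrow> 'a" where
  "W x j = 1 + (\<Sum>i<j. inverse x ^ (2^(i+1)))"

lemma W_Suc: "W x (Suc j) = (W x j)^2 + (inverse x)^2"
proof -
  have "(W x j)^2 = 1 + (\<Sum>i<j. (inverse x ^ (2^(i+1)))^2)"
    unfolding W_def by (simp add: frob frob_sum)
  also have "(\<Sum>i<j. (inverse x ^ (2^(i+1)))^2) = (\<Sum>i<j. inverse x ^ (2^(Suc i+1)))"
    by (intro sum.cong refl) (simp add: power_mult[symmetric] mult.commute)
  finally have e1: "(W x j)^2 = 1 + (\<Sum>i<j. inverse x ^ (2^(Suc i+1)))" .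
  have e2: "W x (Suc j) = 1 + (inverse x ^ (2^(0+1)) + (\<Sum>i<j. inverse x ^ (2^(Suc i + 1))))"
    unfolding W_def by (rule arg_cong[where f="\<lambda>s. 1 + s"], rule sum.lessThan_Suc_shift)
  show ?thesis unfolding e1 e2 by (simp add: algebra_simps power2_eq_square)
qed

lemma d_tj:
  assumes x0: "(x::'a) \<noteq> 0"
  shows "dickson (2^j + 1) x = x^(2^j+1) * W x j"
proof (induction j)
  case 0
  have "dickson (2^0+1) x = dickson (Suc (Suc 0)) x" by simp
  also have "\<dots> = x * x" by (simp only: d_rec2) (simp add: c2)
  finally show ?case by (simp add: W_def)
next
  case (Suc j)
  let ?N = "2^Suc j :: nat"
  have "dickson (?N + 2) x = dickson (2 * (2^j+1)) x" by simp
  also have "\<dots> = (x^(2^j+1) * W x j)^2" by (simp only: d_double Suc)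
  also have "\<dots> = x^?N * x * x * (W x j)^2"
  proof -
    have "(x^(2^j+1))^2 = x^((2^j+1)*2)" by (rule power_mult[symmetric])
    also have "(2^j+1)*2 = Suc (Suc ?N)" by simp
    finally have "(x^(2^j+1))^2 = x^?N * x * x" by (simp add: algebra_simps)
    then show ?thesis by (simp add: power_mult_distrib)
  qed
  finally have h1: "dickson (?N + 2) x = x^?N * x * x * (W x j)^2" .
  have h2: "dickson (?N + 2) x = x * dickson (?N+1) x + x^?N"
    using d_rec2[of ?N x] d_pow2[of "Suc j" x] by simp
  have a: "x * dickson (?N+1) x = x^?N*x*x*(W x j)^2 + x^?N"
  proof -
    from h1 h2 have "x * dickson (?N+1) x + x^?N = x^?N*x*x*(W x j)^2" by simp
    then have "x * dickson (?N+1) x = x^?N*x*x*(W x j)^2 - x^?N" by (simp add: eq_diff_eq)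
    then show ?thesis by (simp add: c2_diff)
  qed
  have b: "x * (x^(?N+1) * W x (Suc j)) = x^?N*x*x*(W x j)^2 + x^?N * (x*x*(inverse x)^2)"
    unfolding W_Suc by (simp add: algebra_simps)
  have c: "x*x*(inverse x)^2 = 1" using x0 by (simp add: power2_eq_square field_simps)
  have "x * dickson (?N+1) x = x * (x^(?N+1) * W x (Suc j))" using a b c by simp
  then show ?case using x0 by simp
qed

end




context
  fixes dummy :: "'a::field"
  assumes c2: "(2::'a) = 0"
begin

lemma d_two: "dickson 2 (x::'a) = x^2"
proof -
  have "dickson 2 x = dickson (Suc (Suc 0)) x" by (simp add: numeral_2_eq_2)
  also have "\<dots> = x^2" by (simp add: c2 power2_eq_square)
  finally show ?thesis .
qed

lemma per:
  assumes P: "dickson P (x::'a) = 0" "dickson (P-1) x = x" "P \<ge> 1"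
  shows "dickson (k + P) x = dickson k x"
proof -
  have "dickson (k + P) x = dickson k x \<and> dickson (Suc k + P) x = dickson (Suc k) x"
  proof (induction k)
    case 0
    obtain p where p: "P = Suc p" using P(3) by (cases P) auto
    have "dickson (Suc P) x = x * dickson P x + dickson p x"
      unfolding p by (rule d_rec2[OF c2])
    then show ?case using P p by (simp add: c2)
  next
    case (Suc k)
    have "dickson (Suc (Suc k) + P) x = x * dickson (Suc k + P) x + dickson (k + P) x"
      using d_rec2[OF c2, of "k+P" x] by simp
    then show ?case using Suc d_rec2[OF c2, of k x] by simp
  qed
  then show ?thesis by simp
qed

lemma per_mult:
  assumes P: "dickson P (x::'a) = 0" "dickson (P-1) x = x" "P \<ge> 1"
  shows "dickson (m * P + k) x = dickson k x"
proof (induction m)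
  case 0 then show ?case by simp
next
  case (Suc m)
  have "dickson (Suc m * P + k) x = dickson ((m * P + k) + P) x" by (simp add: algebra_simps)
  also have "\<dots> = dickson (m * P + k) x" by (rule per[OF P])
  finally show ?case using Suc by simp
qed

lemma per_mod:
  assumes P: "dickson P (x::'a) = 0" "dickson (P-1) x = x" "P \<ge> 1"
  shows "dickson k x = dickson (k mod P) x"
  using per_mult[OF P, of "k div P" "k mod P"] by simp

lemma sym:
  assumes P: "dickson P (x::'a) = 0" "dickson (P-1) x = x" "P \<ge> 1" and j: "j \<le> P"
  shows "dickson (P - j) x = dickson j x"
proof -
  have gen: "j + 1 \<le> P \<longrightarrow> dickson (P - j) x = dickson j x \<and> dickson (P - j - 1) x = dickson (Suc j) x" for j
  proof (induction j)
    case 0 then show ?case using P by (simp add: c2)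
  next
    case (Suc j)
    show ?case
    proof
      assume h: "Suc j + 1 \<le> P"
      then have ih: "dickson (P - j) x = dickson j x" "dickson (P - j - 1) x = dickson (Suc j) x"
        using Suc by auto
      have e: "P - j = Suc (Suc (P - Suc j - 1))" using h by simp
      have "dickson (P - j) x = x * dickson (Suc (P - Suc j - 1)) x + dickson (P - Suc j - 1) x"
        unfolding e by (rule d_rec2[OF c2])
      moreover have "Suc (P - Suc j - 1) = P - j - 1" using h by simp
      ultimately have "dickson (P - Suc j - 1) x = dickson (P - j) x + x * dickson (P - j - 1) x"
        by (simp add: c2 c2_diff[OF c2] eq_diff_eq[symmetric] algebra_simps)
      then have "dickson (P - Suc j - 1) x = dickson (Suc (Suc j)) x"
        unfolding ih d_rec2[OF c2] by (simp add: algebra_simps)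
      then show "dickson (P - Suc j) x = dickson (Suc j) x \<and> dickson (P - Suc j - 1) x = dickson (Suc (Suc j)) x"
        using ih by simp
    qed
  qed
  then show ?thesis
  proof (cases "j = P")
    case True then show ?thesis using P by (simp add: c2)
  next
    case False then show ?thesis using j gen[of j] by simp
  qed
qed

end




fun dp :: "nat \<Rightarrow> 'a::comm_ring_1 poly" where
  "dp 0 = [:2:]"
| "dp (Suc 0) = [:0, 1:]"
| "dp (Suc (Suc k)) = pCons 0 (dp (Suc k)) - dp k"

lemma poly_dp: "poly (dp k) x = dickson k x"
  by (induction k rule: dp.induct) simp_all

lemma dp_deg: "degree (dp k :: 'a::comm_ring_1 poly) \<le> k \<and> coeff (dp k :: 'a poly) k = (if k = 0 then 2 else 1)"
proof (induction k rule: dp.induct)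
  case 1 then show ?case by simp
next
  case 2 then show ?case by simp
next
  case (3 k)
  have i1: "degree (dp (Suc k) :: 'a poly) \<le> Suc k" and i2: "degree (dp k :: 'a poly) \<le> k"
    and i3: "coeff (dp (Suc k) :: 'a poly) (Suc k) = 1" using "3.IH" by auto
  have d1: "degree (pCons 0 (dp (Suc k) :: 'a poly)) \<le> Suc (Suc k)"
    using i1 degree_pCons_le[of 0 "dp (Suc k) :: 'a poly"] by linarith
  have d2: "degree (dp k :: 'a poly) \<le> Suc (Suc k)" using i2 by linarith
  have "degree (dp (Suc (Suc k)) :: 'a poly) \<le> Suc (Suc k)"
    using degree_diff_le[OF d1 d2] by simp
  moreover have "coeff (dp k :: 'a poly) (Suc (Suc k)) = 0"
    using i2 by (intro coeff_eq_0) linarith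
  ultimately show ?case using i3 by simp
qed

lemma card_le_roots:
  fixes p :: "'a::field poly"
  assumes "p \<noteq> 0" "\<forall>x\<in>S. poly p x = 0"
  shows "card S \<le> degree p"
proof -
  have "S \<subseteq> {x. poly p x = 0}" using assms by auto
  then have "card S \<le> card {x. poly p x = 0}"
    using poly_roots_finite[OF assms(1)] by (rule card_mono[rotated])
  also have "\<dots> \<le> degree p" by (rule card_poly_roots_bound[OF assms(1)])
  finally show ?thesis .
qed

context
  fixes dummy :: "'a::field"
  assumes c2: "(2::'a) = 0"
begin

lemma dp_nz: "k \<ge> 1 \<Longrightarrow> (dp k :: 'a poly) \<noteq> 0 \<and> degree (dp k :: 'a poly) \<le> k"
proof -
  assume k: "k \<ge> 1"
  have "coeff (dp k :: 'a poly) k = 1" using dp_deg[of k, where 'a='a] k by simp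
  then have "(dp k :: 'a poly) \<noteq> 0" by (metis coeff_0 zero_neq_one)
  then show ?thesis using dp_deg[of k, where 'a='a] by simp
qed

lemma vanish:
  fixes S :: "'a set"
  assumes fin: "finite S" and hS: "\<forall>x\<in>S. dickson P x = 0 \<and> dickson (P-1) x = x"
    and P1: "P \<ge> 1" and card: "P + 1 \<le> 2 * card S"
  shows "(\<forall>x\<in>S. dickson k x = 0) \<longleftrightarrow> P dvd k"
proof
  assume "P dvd k"
  then obtain m where "k = P * m" by (rule dvdE)
  then have k: "k = m * P" by simp
  show "\<forall>x\<in>S. dickson k x = 0"
  proof
    fix x assume "x \<in> S"
    then have "dickson (m * P + 0) x = dickson 0 x"
      using hS P1 by (intro per_mult[OF c2]) auto
    then show "dickson k x = 0" using k c2 by simp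
  qed
next
  assume all: "\<forall>x\<in>S. dickson k x = 0"
  define r where "r = k mod P"
  define r' where "r' = min r (P - r)"
  have rP: "r < P" unfolding r_def using P1 by simp
  have zr: "\<forall>x\<in>S. dickson r' x = 0"
  proof
    fix x assume x: "x \<in> S"
    have hx: "dickson P x = 0" "dickson (P-1) x = x" using hS x by auto
    have "dickson r x = 0" using per_mod[OF c2 hx P1, of k] all x unfolding r_def by simp
    moreover have "dickson (P - r) x = dickson r x" using sym[OF c2 hx P1] rP by simp
    ultimately show "dickson r' x = 0" unfolding r'_def by (cases "r \<le> P - r") (auto simp: min_def)
  qed
  show "P dvd k"
  proof (rule ccontr)
    assume "\<not> P dvd k"
    then have "r \<noteq> 0" unfolding r_def by (simp add: dvd_eq_mod_eq_0)
    then have "r \<ge> 1" by simp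
    then have r1: "r' \<ge> 1" unfolding r'_def using rP by simp
    have "2 * r' \<le> P" unfolding r'_def by simp
    have "card S \<le> degree (dp r' :: 'a poly)"
      using dp_nz[OF r1] zr by (intro card_le_roots) (auto simp: poly_dp)
    also have "\<dots> \<le> r'" using dp_nz[OF r1] by simp
    finally show False using \<open>2 * r' \<le> P\<close> card by linarith
  qed
qed

lemma squares:
  fixes S :: "'a set"
  assumes fin: "finite S" and hS: "\<forall>x\<in>S. dickson P x = 0 \<and> dickson (P-1) x = x"
    and P3: "P \<ge> 3" and card: "P + 1 \<le> 2 * card S"
  shows "(\<forall>x\<in>S. dickson k x = x^2) \<longleftrightarrow> (k mod P = 2 \<or> k mod P = P - 2)"
proof -
  have P1: "P \<ge> 1" using P3 by simp
  define r where "r = k mod P"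
  have rP: "r < P" unfolding r_def using P1 by simp
  have red: "dickson k x = dickson r x" "dickson (P - r) x = dickson r x" if "x \<in> S" for x
  proof -
    have hx: "dickson P x = 0" "dickson (P-1) x = x" using hS that by auto
    show "dickson k x = dickson r x" using per_mod[OF c2 hx P1, of k] unfolding r_def .
    show "dickson (P - r) x = dickson r x" using sym[OF c2 hx P1] rP by simp
  qed
  have sym2: "dickson (P - 2) x = x^2" if "x \<in> S" for x
  proof -
    have hx: "dickson P x = 0" "dickson (P-1) x = x" using hS that by auto
    show ?thesis using sym[OF c2 hx P1, of 2] P3 d_two[OF c2] by simp
  qed
  show ?thesis
  proof
    assume "k mod P = 2 \<or> k mod P = P - 2"
    then show "\<forall>x\<in>S. dickson k x = x^2"
      using red sym2 d_two[OF c2] unfolding r_def[symmetric] by auto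
  next
    assume all: "\<forall>x\<in>S. dickson k x = x^2"
    have allr: "\<forall>x\<in>S. dickson r x = x^2" using all red by auto
    have "card S \<ge> 2" using card P3 by linarith
    then obtain x where x: "x \<in> S" "x \<noteq> 0"
    proof -
      assume *: "\<And>x. x \<in> S \<Longrightarrow> x \<noteq> 0 \<Longrightarrow> thesis"
      have "\<not> S \<subseteq> {0}"
      proof
        assume "S \<subseteq> {0}" then have "card S \<le> card {0::'a}" by (intro card_mono) auto
        with \<open>card S \<ge> 2\<close> show False by simp
      qed
      then show thesis using * by auto
    qed
    have r0: "r \<noteq> 0"
    proof
      assume "r = 0"
      then have "dickson 0 x = x^2" using allr x by simp
      then show False using x c2 by simp
    qed
    show "k mod P = 2 \<or> k mod P = P - 2"
      unfolding r_def[symmetric]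
    proof (cases "P = 3")
      case True then show "r = 2 \<or> r = P - 2" using r0 rP by auto
    next
      case False
      then have P4: "P \<ge> 4" using P3 by simp
      then have c3: "card S \<ge> 3" using card by linarith
      define r' where "r' = min r (P - r)"
      have r1: "r' \<ge> 1" unfolding r'_def using rP r0 by simp
      have "2 * r' \<le> P" unfolding r'_def by simp
      have allr': "\<forall>x\<in>S. dickson r' x = x^2"
      proof
        fix x assume x: "x \<in> S"
        show "dickson r' x = x^2"
        proof (cases "r \<le> P - r")
          case True then have "r' = r" unfolding r'_def by simp
          then show ?thesis using allr x by simp
        next
          case False then have "r' = P - r" unfolding r'_def by simp
          then show ?thesis using allr x red(2)[OF x] by simp
        qed
      qed
      show "r = 2 \<or> r = P - 2"
      proof (rule ccontr)
        assume "\<not> (r = 2 \<or> r = P - 2)"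
        then have r2: "r' \<noteq> 2" unfolding r'_def min_def using rP by (cases "r \<le> P - r") auto
        define p where "p = dp r' - monom (1::'a) 2"
        have cm: "coeff p (max r' 2) \<noteq> 0"
        proof (cases "r' > 2")
          case True then show ?thesis using dp_deg[of r', where 'a='a] by (simp add: p_def coeff_monom)
        next
          case False
          then have "r' = 1" using r1 r2 by simp
          then show ?thesis by (simp add: p_def coeff_monom)
        qed
        then have pnz: "p \<noteq> 0" by auto
        have "degree p \<le> max r' 2" unfolding p_def
          using dp_nz[OF r1] degree_monom_le[of "1::'a" 2]
          by (intro degree_diff_le) auto
        moreover have "card S \<le> degree p"
          using pnz allr' by (intro card_le_roots) (auto simp: p_def poly_dp poly_monom)
        ultimately show False using \<open>2 * r' \<le> P\<close> card c3 by linarith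
      qed
    qed
  qed
qed

end




lemma shift_sum:
  fixes f :: "nat \<Rightarrow> 'b::cancel_comm_monoid_add"
  assumes "f n = f 0"
  shows "(\<Sum>i<n. f (Suc i)) = (\<Sum>i<n. f i)"
proof -
  have "f 0 + (\<Sum>i<n. f (Suc i)) = (\<Sum>i<Suc n. f i)" by (rule sum.lessThan_Suc_shift[symmetric])
  also have "\<dots> = (\<Sum>i<n. f i) + f n" by simp
  finally show ?thesis using assms by (simp add: add.commute)
qed

lemma cong_conv:
  assumes P: "P \<ge> 3"
  shows "([int k = 2] (mod int P) \<longleftrightarrow> k mod P = 2) \<and> ([int k = - 2] (mod int P) \<longleftrightarrow> k mod P = P - 2)"
proof
  have "[int k = 2] (mod int P) \<longleftrightarrow> [int k = int 2] (mod int P)" by simp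
  also have "\<dots> \<longleftrightarrow> [k = 2] (mod P)" by (rule cong_int_iff)
  also have "\<dots> \<longleftrightarrow> k mod P = 2" using P by (simp add: cong_def)
  finally show "[int k = 2] (mod int P) \<longleftrightarrow> k mod P = 2" .
  have "[int k = - 2] (mod int P) \<longleftrightarrow> int P dvd (int k + 2)" by (simp add: cong_iff_dvd_diff)
  also have "\<dots> \<longleftrightarrow> int P dvd (int k - int (P - 2))"
  proof -
    have e: "int k - int (P - 2) = (int k + 2) - int P" using P by simp
    have "int P dvd (int k + 2) - int P \<longleftrightarrow> int P dvd (int k + 2) + (-1) * int P" by simp
    also have "\<dots> \<longleftrightarrow> int P dvd (int k + 2)" by (rule dvd_add_times_triv_right_iff)
    finally show ?thesis unfolding e by simp
  qed
  also have "\<dots> \<longleftrightarrow> [int k = int (P - 2)] (mod int P)" by (simp add: cong_iff_dvd_diff)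
  also have "\<dots> \<longleftrightarrow> [k = P - 2] (mod P)" by (rule cong_int_iff)
  also have "\<dots> \<longleftrightarrow> k mod P = P - 2" using P by (simp add: cong_def)
  finally show "[int k = - 2] (mod int P) \<longleftrightarrow> k mod P = P - 2" .
qed

lemma dvd_pow_minus1:
  fixes q :: nat
  assumes "q \<ge> 1"
  shows "(q - 1) dvd (q ^ e - 1)"
proof (induction e)
  case 0 then show ?case by simp
next
  case (Suc e)
  have "q ^ e \<ge> 1" using assms by simp
  then have "q ^ Suc e - 1 = q * (q ^ e - 1) + (q - 1)" using assms
    by (simp add: algebra_simps diff_mult_distrib2)
  then show ?case using Suc by simp
qed

lemma dvd_even:
  fixes q :: nat
  assumes "q \<ge> 1" "even e"
  shows "(q + 1) dvd (q ^ e - 1)"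
proof -
  obtain t where e: "e = 2 * t" using assms by auto
  have "(q^2 - 1) dvd ((q^2) ^ t - 1)" using assms by (intro dvd_pow_minus1) simp
  moreover have "q^2 - 1 = (q + 1) * (q - 1)" by (simp add: power2_eq_square algebra_simps diff_mult_distrib2)
  ultimately have "(q + 1) dvd ((q^2) ^ t - 1)" using dvd_trans[OF dvd_triv_left[of "q+1" "q-1"]] by simp
  then show ?thesis unfolding e by (simp add: power_mult)
qed

lemma dvd_odd:
  fixes q :: nat
  assumes "q \<ge> 1" "odd e"
  shows "(q + 1) dvd (q ^ e + 1)"
proof -
  from assms(2) obtain t where e: "e = 2 * t + 1" by (rule oddE)
  have d: "(q + 1) dvd (q ^ (2*t) - 1)" using assms by (intro dvd_even) auto
  have "q ^ (2*t) \<ge> 1" using assms by simp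
  then have eq: "q ^ e + 1 = q * (q ^ (2*t) - 1) + (q + 1)" unfolding e
    by (simp add: algebra_simps diff_mult_distrib2)
  show ?thesis unfolding eq by (rule dvd_add[OF dvd_mult[OF d] dvd_refl])
qed

context
  fixes dummy :: "'a::field"
  assumes c2: "(2::'a) = 0"
begin

lemma per_dvd:
  assumes P: "dickson P (x::'a) = 0" "dickson (P-1) x = x" "P \<ge> 1" and m: "P dvd m"
  shows "dickson m x = 0 \<and> dickson (m + 2) x = x^2"
proof -
  from m(1) obtain t where "m = P * t" by (rule dvdE)
  then have mt: "m = t * P" by simp
  have "dickson (t * P + 0) x = dickson 0 x" by (rule per_mult[OF c2 P])
  moreover have "dickson (t * P + 2) x = dickson 2 x" by (rule per_mult[OF c2 P])
  ultimately show ?thesis using mt d_two[OF c2] c2 by simp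
qed

lemma per_minus2:
  assumes P: "dickson P (x::'a) = 0" "dickson (P-1) x = x" "P \<ge> 2" and m: "P dvd m" "m \<ge> P"
  shows "dickson (m - 2) x = x^2"
proof -
  from m(1) obtain t where "m = P * t" by (rule dvdE)
  then have mt: "m = t * P" by simp
  then have "t \<ge> 1" using m P by (cases t) auto
  then have e: "m - 2 = (t - 1) * P + (P - 2)" using mt P by (cases t) (auto simp: algebra_simps)
  have P1: "P \<ge> 1" using P by simp
  have "dickson ((t - 1) * P + (P - 2)) x = dickson (P - 2) x" by (rule per_mult[OF c2 P(1,2) P1])
  also have "\<dots> = dickson 2 x" using sym[OF c2 P(1,2) P1, of 2] P by simp
  finally show ?thesis unfolding e d_two[OF c2] .
qed

end




context
  fixes n :: nat
  assumes card: "CARD('a::{field,finite}) = 2 ^ n"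
begin

lemma c2': "(2::'a) = 0" using char2[OF card] by simp
lemma n1: "n \<ge> 1" using char2[OF card] by simp

lemma tr_frob: "(abs_trace n (c::'a))^2 = abs_trace n c"
proof -
  have "(abs_trace n c)^2 = (\<Sum>i<n. (c ^ (2^i))^2)"
    unfolding abs_trace_def by (rule frob_sum[OF c2'])
  also have "\<dots> = (\<Sum>i<n. c ^ (2^(Suc i)))"
    by (intro sum.cong refl) (simp add: power_mult[symmetric] mult.commute)
  also have "\<dots> = (\<Sum>i<n. c ^ (2^i))"
    using fermat[of c] card by (intro shift_sum) simp
  finally show ?thesis unfolding abs_trace_def .
qed

lemma tr01: "abs_trace n (c::'a) = 0 \<or> abs_trace n c = 1"
proof -
  have "abs_trace n c * (abs_trace n c - 1) = 0"
    using tr_frob[of c] by (simp add: power2_eq_square algebra_simps)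
  then show ?thesis by simp
qed

lemma tr0: "abs_trace n (0::'a) = 0"
  unfolding abs_trace_def by (simp add: power_0_left)

lemma W_n: "W (x::'a) n = 1 + abs_trace n (inverse x)"
proof -
  have "(\<Sum>i<n. inverse x ^ (2^(Suc i))) = (\<Sum>i<n. inverse x ^ (2^i))"
    using fermat[of "inverse x"] card by (intro shift_sum) simp
  then show ?thesis unfolding W_def[OF c2'] abs_trace_def by simp
qed

lemma d_q: "dickson (2^n) (x::'a) = x"
  using d_pow2[OF c2', of n x] fermat[of x] card by simp

lemma d_q1: "dickson (2^n + 1) (x::'a) = x^2 * (1 + abs_trace n (inverse x))"
proof (cases "x = 0")
  case True then show ?thesis by (simp add: d_zero[OF c2'])
next
  case False
  have "dickson (2^n + 1) x = x^(2^n+1) * W x n" by (rule d_tj[OF c2' False])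
  also have "x^(2^n+1) = x^2" using fermat[of x] card by (simp add: power2_eq_square)
  finally show ?thesis unfolding W_n .
qed

lemma d_qm1: "dickson (2^n - 1) (x::'a) = x^2 * abs_trace n (inverse x)"
proof -
  have q2: "2^n \<ge> (2::nat)" using n1 by (metis one_le_numeral power_increasing power_one_right)
  then have e: "2^n + 1 = Suc (Suc (2^n - 1))" by simp
  have "dickson (2^n + 1) x = x * dickson (Suc (2^n - 1)) x + dickson (2^n - 1) x"
    unfolding e by (rule d_rec2[OF c2'])
  moreover have "Suc (2^n - 1) = 2^n" using q2 by simp
  ultimately have "dickson (2^n - 1) x = dickson (2^n + 1) x - x * x"
    using d_q[of x] by simp
  also have "\<dots> = x^2 * abs_trace n (inverse x) + (x^2 + x^2)"
    unfolding d_q1 c2_diff[OF c2'] by (simp add: power2_eq_square algebra_simps)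
  finally show ?thesis by (simp add: c2_add_self[OF c2'])
qed

lemma d_qm2: "abs_trace n (inverse x) = 0 \<Longrightarrow> dickson (2^n - 2) (x::'a) = x"
proof -
  assume t: "abs_trace n (inverse x) = 0"
  have q2: "2^n \<ge> (2::nat)" using n1 by (metis one_le_numeral power_increasing power_one_right)
  then have e: "2^n = Suc (Suc (2^n - 2))" by simp
  have "dickson (2^n) x = x * dickson (Suc (2^n - 2)) x + dickson (2^n - 2) x"
    by (subst e) (rule d_rec2[OF c2'])
  moreover have "Suc (2^n - 2) = 2^n - 1" using q2 by simp
  ultimately show ?thesis using d_q[of x] d_qm1[of x] t by simp
qed


definition trp :: "'a poly" where
  "trp = (\<Sum>i<n. monom 1 (2^i))"

lemma poly_trp: "poly trp c = abs_trace n c"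
  unfolding trp_def abs_trace_def by (simp add: poly_sum poly_monom)

lemma coeff_trp: "coeff trp k = (\<Sum>i<n. if 2^i = k then 1 else 0)"
  unfolding trp_def by (simp add: coeff_sum coeff_monom)

lemma trp_deg: "degree trp \<le> 2^(n-1)"
proof (rule degree_le, intro allI impI)
  fix k :: nat assume k: "2^(n-1) < k"
  have "2^i \<noteq> k" if "i < n" for i
  proof -
    have "(2::nat)^i \<le> 2^(n-1)" using that by (intro power_increasing) auto
    then show ?thesis using k by linarith
  qed
  then show "coeff trp k = 0" unfolding coeff_trp by (intro sum.neutral) auto
qed

lemma trp_top: "coeff trp (2^(n-1)) = 1"
proof -
  have "(\<Sum>i<n. if (2::nat)^i = 2^(n-1) then (1::'a) else 0) = (\<Sum>i<n. if i = n - 1 then 1 else 0)"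
    by (intro sum.cong refl) (simp add: power_inject_exp)
  also have "\<dots> = 1" using n1 by simp
  finally show ?thesis unfolding coeff_trp .
qed

lemma card_tr0: "card {c::'a. abs_trace n c = 0} \<le> 2^(n-1)"
proof -
  have nz: "trp \<noteq> 0" using trp_top by auto
  have "card {c::'a. abs_trace n c = 0} \<le> degree trp"
    using nz by (intro card_le_roots) (auto simp: poly_trp)
  then show ?thesis using trp_deg by linarith
qed

lemma card_tr1: "card {c::'a. abs_trace n c = 1} \<le> 2^(n-1)"
proof -
  have c: "coeff (trp - 1) (2^(n-1)) = 1" using trp_top by (simp add: coeff_1)
  then have nz: "trp - 1 \<noteq> 0" by auto
  have "card {c::'a. abs_trace n c = 1} \<le> degree (trp - 1)"
    using nz by (intro card_le_roots) (auto simp: poly_trp)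
  moreover have "degree (trp - 1) \<le> 2^(n-1)"
    using trp_deg by (intro degree_diff_le) auto
  ultimately show ?thesis by linarith
qed

lemma card_tr_exact: "card {c::'a. abs_trace n c = 0} = 2^(n-1) \<and> card {c::'a. abs_trace n c = 1} = 2^(n-1)"
proof -
  have U: "UNIV = {c::'a. abs_trace n c = 0} \<union> {c. abs_trace n c = 1}" using tr01 by auto
  have "card ({c::'a. abs_trace n c = 0} \<union> {c. abs_trace n c = 1}) = card {c::'a. abs_trace n c = 0} + card {c::'a. abs_trace n c = 1}"
    by (rule card_Un_disjoint) auto
  then have "CARD('a) = card {c::'a. abs_trace n c = 0} + card {c::'a. abs_trace n c = 1}"
    unfolding U[symmetric] .
  moreover have "(2::nat)^n = 2 * 2^(n-1)" using n1 by (cases n) auto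
  ultimately show ?thesis using card card_tr0 card_tr1 by linarith
qed

lemma inj_inv: "inj_on (inverse :: 'a \<Rightarrow> 'a) A"
  by (rule inj_onI) (metis inverse_inverse_eq)

lemma S0_eq: "trace_set n 0 \<union> {0} = inverse ` {c::'a. abs_trace n c = 0}"
proof -
  have "trace_set n 0 \<union> {0} = {a::'a. abs_trace n (inverse a) = 0}"
    unfolding trace_set_def using tr0 by auto
  also have "\<dots> = inverse ` {c::'a. abs_trace n c = 0}"
    by (auto simp: image_def)
  finally show ?thesis .
qed

lemma T1_eq: "trace_set n 1 = inverse ` {c::'a. abs_trace n c = 1}"
proof -
  have "trace_set n 1 = {a::'a. abs_trace n (inverse a) = 1}"
    unfolding trace_set_def using tr0 by auto
  also have "\<dots> = inverse ` {c::'a. abs_trace n c = 1}"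
    by (auto simp: image_def)
  finally show ?thesis .
qed

lemma card_S0: "card (trace_set n 0 \<union> {0::'a}) = 2^(n-1)"
  unfolding S0_eq using card_tr_exact by (simp add: card_image[OF inj_inv])

lemma card_T1: "card (trace_set n 1 :: 'a set) = 2^(n-1)"
  unfolding T1_eq using card_tr_exact by (simp add: card_image[OF inj_inv])

lemma zero_notin: "(0::'a) \<notin> trace_set n j"
  unfolding trace_set_def by simp

lemma card_S1: "card (trace_set n 1 \<union> {0::'a}) = 2^(n-1) + 1"
  using card_T1 zero_notin[of 1] by simp

lemma card_T0: "card (trace_set n 0 :: 'a set) = 2^(n-1) - 1"
  using card_S0 zero_notin[of 0] by simp

lemma S1_hyp: "\<forall>x\<in>trace_set n 1 \<union> {0::'a}. dickson (2^n+1) x = 0 \<and> dickson (2^n + 1 - 1) x = x"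
proof
  fix x :: 'a assume "x \<in> trace_set n 1 \<union> {0}"
  then have "x = 0 \<or> abs_trace n (inverse x) = 1" unfolding trace_set_def by auto
  then have "dickson (2^n+1) x = 0" using d_q1[of x] c2' by (auto simp: d_zero[OF c2'])
  then show "dickson (2^n+1) x = 0 \<and> dickson (2^n + 1 - 1) x = x" using d_q[of x] by simp
qed

lemma S0_hyp: "\<forall>x\<in>trace_set n 0 \<union> {0::'a}. dickson (2^n - 1) x = 0 \<and> dickson (2^n - 1 - 1) x = x"
proof
  fix x :: 'a assume "x \<in> trace_set n 0 \<union> {0}"
  then have t: "abs_trace n (inverse x) = 0" unfolding trace_set_def using tr0 by auto
  have "2^n - 1 - 1 = (2::nat)^n - 2" by simp
  then show "dickson (2^n - 1) x = 0 \<and> dickson (2^n - 1 - 1) x = x"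
    using d_qm1[of x] d_qm2[OF t] t by simp
qed


lemma arith1: "2*a = (b::nat) \<Longrightarrow> b + 1 + 1 \<le> 2*(a+1)" by simp
lemma arith2: "2*a = (b::nat) \<Longrightarrow> b > 2 \<Longrightarrow> b - 1 + 1 \<le> 2*a" by simp

lemma two_pow: "2 * 2^(n-1) = (2::nat)^n"
  using n1 by (cases n) auto

lemma img0: "A \<noteq> {} \<Longrightarrow> (f ` A = {0} \<longleftrightarrow> (\<forall>x\<in>A. f x = 0))"
  by auto

lemma part1: "(\<forall>k. ((\<lambda>x. dickson k x) ` (trace_set n 1 :: 'a set) = {0} \<longleftrightarrow> (2^n + 1) dvd k))"
proof
  fix k
  have "card (trace_set n 1 :: 'a set) \<noteq> 0" using card_T1 by simp
  then have ne: "(trace_set n 1 :: 'a set) \<noteq> {}" by auto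
  have "(\<forall>x\<in>trace_set n 1 \<union> {0::'a}. dickson k x = 0) \<longleftrightarrow> (2^n + 1) dvd k"
  proof (rule vanish[OF c2' _ S1_hyp])
    show "finite (trace_set n 1 \<union> {0::'a})" by simp
    show "1 \<le> (2::nat)^n + 1" by simp
    show "2^n + 1 + 1 \<le> 2 * card (trace_set n 1 \<union> {0::'a})" unfolding card_S1 by (rule arith1[OF two_pow])
  qed
  moreover have "(\<forall>x\<in>(trace_set n 1 :: 'a set). dickson k x = 0) \<longleftrightarrow> (\<forall>x\<in>trace_set n 1 \<union> {0::'a}. dickson k x = 0)"
    using d_zero[OF c2'] by auto
  ultimately show "(\<lambda>x. dickson k x) ` (trace_set n 1 :: 'a set) = {0} \<longleftrightarrow> (2^n + 1) dvd k"
    unfolding img0[OF ne] by blast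
qed

lemma part2: "2^n > (2::nat) \<Longrightarrow> (\<forall>k. ((\<lambda>x. dickson k x) ` (trace_set n 0 :: 'a set) = {0} \<longleftrightarrow> (2^n - 1) dvd k))"
proof
  fix k assume q2: "2^n > (2::nat)"
  have n2: "n \<ge> 2" using q2 by (cases n; cases "n - 1") auto
  have "(2::nat)^1 \<le> 2^(n-1)" using n2 by (intro power_increasing) auto
  then have c: "(2::nat)^(n-1) \<ge> 2" by simp
  have "card (trace_set n 0 :: 'a set) \<noteq> 0" using card_T0 c by simp
  then have ne: "(trace_set n 0 :: 'a set) \<noteq> {}" by auto
  have "(\<forall>x\<in>trace_set n 0 \<union> {0::'a}. dickson k x = 0) \<longleftrightarrow> (2^n - 1) dvd k"
  proof (rule vanish[OF c2' _ S0_hyp])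
    show "finite (trace_set n 0 \<union> {0::'a})" by simp
    show "1 \<le> (2::nat)^n - 1" using q2 by linarith
    show "2^n - 1 + 1 \<le> 2 * card (trace_set n 0 \<union> {0::'a})" unfolding card_S0 by (rule arith2[OF two_pow q2])
  qed
  moreover have "(\<forall>x\<in>(trace_set n 0 :: 'a set). dickson k x = 0) \<longleftrightarrow> (\<forall>x\<in>trace_set n 0 \<union> {0::'a}. dickson k x = 0)"
    using d_zero[OF c2'] by auto
  ultimately show "(\<lambda>x. dickson k x) ` (trace_set n 0 :: 'a set) = {0} \<longleftrightarrow> (2^n - 1) dvd k"
    unfolding img0[OF ne] by blast
qed


lemma q_ge2: "(2::nat)^n \<ge> 2"
  using power_increasing[of 1 n "2::nat"] n1 by simp

lemma part3: "\<forall>k. ((\<forall>b\<in>(trace_set n 1 :: 'a set). dickson k b = b ^ 2) \<longleftrightarrow>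
          ([int k = 2] (mod int (2^n) + 1) \<or> [int k = - 2] (mod int (2^n) + 1)))"
proof
  fix k
  have P3: "(3::nat) \<le> 2^n + 1" using q_ge2 by linarith
  have A: "(\<forall>x\<in>trace_set n 1 \<union> {0::'a}. dickson k x = x^2) \<longleftrightarrow> (k mod (2^n+1) = 2 \<or> k mod (2^n+1) = 2^n + 1 - 2)"
  proof (rule squares[OF c2' _ S1_hyp P3])
    show "finite (trace_set n 1 \<union> {0::'a})" by simp
    show "2^n + 1 + 1 \<le> 2 * card (trace_set n 1 \<union> {0::'a})" unfolding card_S1 by (rule arith1[OF two_pow])
  qed
  have B: "(\<forall>x\<in>(trace_set n 1 :: 'a set). dickson k x = x^2) \<longleftrightarrow> (\<forall>x\<in>trace_set n 1 \<union> {0::'a}. dickson k x = x^2)"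
    using d_zero[OF c2'] by auto
  have e: "int (2^n + 1) = int (2^n) + 1" by simp
  have C: "([int k = 2] (mod int (2^n) + 1) \<longleftrightarrow> k mod (2^n+1) = 2) \<and> ([int k = - 2] (mod int (2^n) + 1) \<longleftrightarrow> k mod (2^n+1) = 2^n + 1 - 2)"
    using cong_conv[OF P3, of k] unfolding e .
  show "(\<forall>b\<in>(trace_set n 1 :: 'a set). dickson k b = b ^ 2) \<longleftrightarrow>
          ([int k = 2] (mod int (2^n) + 1) \<or> [int k = - 2] (mod int (2^n) + 1))"
    using A B C by blast
qed

lemma part4: "2^n > (2::nat) \<Longrightarrow> \<forall>k. ((\<forall>a\<in>(trace_set n 0 :: 'a set). dickson k a = a ^ 2) \<longleftrightarrow>
          ([int k = 2] (mod int (2^n) - 1) \<or> [int k = - 2] (mod int (2^n) - 1)))"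
proof
  fix k assume q2: "2^n > (2::nat)"
  have "even ((2::nat)^n)" using n1 by simp
  then have "(2::nat)^n \<noteq> 3" by (metis odd_numeral)
  then have P3: "(3::nat) \<le> 2^n - 1" using q2 by linarith
  have A: "(\<forall>x\<in>trace_set n 0 \<union> {0::'a}. dickson k x = x^2) \<longleftrightarrow> (k mod (2^n-1) = 2 \<or> k mod (2^n-1) = 2^n - 1 - 2)"
  proof (rule squares[OF c2' _ S0_hyp P3])
    show "finite (trace_set n 0 \<union> {0::'a})" by simp
    show "2^n - 1 + 1 \<le> 2 * card (trace_set n 0 \<union> {0::'a})" unfolding card_S0 by (rule arith2[OF two_pow q2])
  qed
  have B: "(\<forall>x\<in>(trace_set n 0 :: 'a set). dickson k x = x^2) \<longleftrightarrow> (\<forall>x\<in>trace_set n 0 \<union> {0::'a}. dickson k x = x^2)"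
    using d_zero[OF c2'] by auto
  have e: "int (2^n - 1) = int (2^n) - 1" using q2 by (simp add: of_nat_diff)
  have C: "([int k = 2] (mod int (2^n) - 1) \<longleftrightarrow> k mod (2^n-1) = 2) \<and> ([int k = - 2] (mod int (2^n) - 1) \<longleftrightarrow> k mod (2^n-1) = 2^n - 1 - 2)"
    using cong_conv[OF P3, of k] unfolding e .
  show "(\<forall>a\<in>(trace_set n 0 :: 'a set). dickson k a = a ^ 2) \<longleftrightarrow>
          ([int k = 2] (mod int (2^n) - 1) \<or> [int k = - 2] (mod int (2^n) - 1))"
    using A B C by blast
qed

lemma S0_facts:
  assumes x: "(x::'a) \<in> trace_set n 0 \<union> {0}"
  shows "dickson ((2^n)^e - 1) x = 0 \<and> dickson ((2^n)^e + 1) x = x^2"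
proof -
  have hx: "dickson (2^n - 1) x = 0" "dickson (2^n - 1 - 1) x = x" using S0_hyp x by auto
  have P1: "(2::nat)^n - 1 \<ge> 1" using q_ge2 by linarith
  have d: "(2^n - 1) dvd ((2::nat)^n)^e - 1" using q_ge2 by (intro dvd_pow_minus1) linarith
  have ge: "((2::nat)^n)^e \<ge> 1" by simp
  have "((2::nat)^n)^e + 1 = (((2::nat)^n)^e - 1) + 2" using ge by linarith
  then show ?thesis using per_dvd[OF c2' hx P1 d] by simp
qed

lemma S1_facts_even:
  assumes x: "(x::'a) \<in> trace_set n 1 \<union> {0}" and e: "even e"
  shows "dickson ((2^n)^e - 1) x = 0 \<and> dickson ((2^n)^e + 1) x = x^2"
proof -
  have hx: "dickson (2^n + 1) x = 0" "dickson (2^n + 1 - 1) x = x" using S1_hyp x by auto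
  have P1: "(2::nat)^n + 1 \<ge> 1" by simp
  have d: "(2^n + 1) dvd ((2::nat)^n)^e - 1" using q_ge2 e by (intro dvd_even) auto
  have ge: "((2::nat)^n)^e \<ge> 1" by simp
  have "((2::nat)^n)^e + 1 = (((2::nat)^n)^e - 1) + 2" using ge by linarith
  then show ?thesis using per_dvd[OF c2' hx P1 d] by simp
qed

lemma T1_facts_odd:
  assumes x: "(x::'a) \<in> trace_set n 1" and e: "odd e"
  shows "dickson ((2^n)^e - 1) x = x^2 \<and> dickson ((2^n)^e + 1) x = 0"
proof -
  have hx: "dickson (2^n + 1) x = 0" "dickson (2^n + 1 - 1) x = x" using S1_hyp x by auto
  have P1: "(2::nat)^n + 1 \<ge> 1" by simp
  have P2: "(2::nat)^n + 1 \<ge> 2" using q_ge2 by linarith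
  have d: "(2^n + 1) dvd ((2::nat)^n)^e + 1" using q_ge2 e by (intro dvd_odd) auto
  have "e \<ge> 1" using e by (cases e) auto
  then have "((2::nat)^n)^1 \<le> ((2::nat)^n)^e" using q_ge2 by (intro power_increasing) auto
  then have "((2::nat)^n)^e \<ge> 2^n" by simp
  then have ge: "((2::nat)^n)^e + 1 \<ge> 2^n + 1" by linarith
  have "((2::nat)^n)^e - 1 = (((2::nat)^n)^e + 1) - 2" by simp
  then show ?thesis using per_dvd[OF c2' hx P1 d] per_minus2[OF c2' hx(1,2) P2 d ge] by simp
qed

lemma cover: "(x::'a) \<in> trace_set n 0 \<union> {0} \<or> x \<in> trace_set n 1"
  using tr01[of "inverse x"] tr0 unfolding trace_set_def by auto

end


theorem proposition3p3:
  fixes n :: nat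
  assumes card: "CARD('a) = 2 ^ n"
  defines "q \<equiv> CARD('a)"
  defines "T0 \<equiv> (trace_set n 0 :: 'a::{field,finite} set)"
  defines "T1 \<equiv> (trace_set n 1 :: 'a set)"
  shows
    "(\<forall>k. ((\<lambda>x. dickson k x) ` T1 = {0} \<longleftrightarrow> (q + 1) dvd k))
   \<and> (q > 2 \<longrightarrow> (\<forall>k. ((\<lambda>x. dickson k x) ` T0 = {0} \<longleftrightarrow> (q - 1) dvd k)))
   \<and> (\<forall>k. ((\<forall>b\<in>T1. dickson k b = b ^ 2) \<longleftrightarrow>
          ([int k = 2] (mod int q + 1) \<or> [int k = - 2] (mod int q + 1))))
   \<and> (q > 2 \<longrightarrow> (\<forall>k. ((\<forall>a\<in>T0. dickson k a = a ^ 2) \<longleftrightarrow>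
          ([int k = 2] (mod int q - 1) \<or> [int k = - 2] (mod int q - 1)))))
   \<and> (\<forall>e::nat. even e \<longrightarrow>
          (\<forall>a::'a. dickson (q ^ e - 1) a = 0 \<and> dickson (q ^ e + 1) a = a ^ 2))
   \<and> (\<forall>e::nat. odd e \<longrightarrow>
          (\<forall>a\<in>T0 \<union> {0}. dickson (q ^ e - 1) a = 0 \<and> dickson (q ^ e + 1) a = a ^ 2)
        \<and> (\<forall>a\<in>T1. dickson (q ^ e - 1) a = a ^ 2 \<and> dickson (q ^ e + 1) a = 0))"
  proof -
  have q: "q = 2^n" using card q_def by simp
  have p5: "\<forall>e::nat. even e \<longrightarrow>
          (\<forall>a::'a. dickson ((2^n) ^ e - 1) a = 0 \<and> dickson ((2^n) ^ e + 1) a = a ^ 2)"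
  proof (intro allI impI)
    fix e :: nat and a :: 'a assume e: "even e"
    show "dickson ((2^n) ^ e - 1) a = 0 \<and> dickson ((2^n) ^ e + 1) a = a ^ 2"
      using cover[OF card, of a] S0_facts[OF card, of a e] S1_facts_even[OF card, of a e] e by blast
  qed
  have p6: "\<forall>e::nat. odd e \<longrightarrow>
          (\<forall>a\<in>(trace_set n 0 :: 'a set) \<union> {0}. dickson ((2^n) ^ e - 1) a = 0 \<and> dickson ((2^n) ^ e + 1) a = a ^ 2)
        \<and> (\<forall>a\<in>(trace_set n 1 :: 'a set). dickson ((2^n) ^ e - 1) a = a ^ 2 \<and> dickson ((2^n) ^ e + 1) a = 0)"
    using S0_facts[OF card] T1_facts_odd[OF card] by blast
  show ?thesis unfolding q T0_def T1_def
    using part1[OF card] part2[OF card] part3[OF card] part4[OF card] p5 p6 by blast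
qed

end
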